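(* In every $\mathcal L$-model: (1) for every program $A\in\mathcal L_a$, $\to_A=\bigcup_{B\in\mathcal L(A)}\to_B$; (2) for any two interchangeable words $A,B\in(\mathrm{AtP}_\Omega\cup\mathcal L_s)^*$, $\to_A=\to_B$.
   Context: $\tau$PDL syntax: formulas $\mathcal L_s$: $\varphi::=p\mid\neg\varphi\mid\forall A.\varphi\mid\mathsf C_\imath A$; programs $\mathcal L_a$: $A::=a\mid\varphi\mid\varphi\Rightarrow\varphi\mid AA\mid A+A\mid A^*$ ($a\in\mathrm{AtP}$, atomic programs), interpreted in $\mathcal L$-models by the standard relational semantics of $\tau$PDL: $\to_\varphi=\{(w,w):w\models\varphi\}$, $\to_{AB}=\to_A\circ\to_B$, $\to_{A+B}=\to_A\cup\to_B$, $\to_{A^*}=\bigcup_{n\ge0}(\to_A)^n$, $\to_{\varphi\Rightarrow\psi}=\bigcup\{\to_C: C\in\Sigma^+,\ \forall w\models\varphi\,\forall w'(w\to_Cw'\Rightarrow w'\models\psi)\}$ with $\Sigma^+$ the finite nonempty compositions of atomic programs, tests and $\Rightarrow$-terms. $\Omega:=\mathsf{tt}\Rightarrow\mathsf{tt}$ ($\mathsf{tt}$ a tautology), $\mathrm{AtP}_\Omega=\mathrm{AtP}\cup\{\Omega\}$. The language $\mathcal L(A)$ of a program (a set of words over the alphabet $\mathrm{AtP}_\Omega\cup\mathcal L_s$) is defined by $\mathcal L(a)=\{a\}$, $\mathcal L(\varphi)=\{\varphi\}$, $\mathcal L(\Omega)=\{\Omega\}$, $\mathcal L(\varphi\Rightarrow\psi)=\mathcal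 L((\neg\varphi)\Omega+\Omega\psi)$, $\mathcal L(A+B)=\mathcal L(A)\cup\mathcal L(B)$, $\mathcal L(AB)=\mathcal L(A)\mathcal L(B)$, $\mathcal L(A^* )=\mathcal L(A)^*$ (usual concatenation and Kleene star, $\varepsilon$ the empty word). A word $A_1\cdots A_n$ denotes the composed relation $\to_{A_1}\circ\cdots\circ\to_{A_n}$, the empty word denoting the identity. Two nonempty words $A=A_1\cdots A_k$ and $B=B_1\cdots B_n$, each written as blocks that are either single letters of $\mathrm{AtP}_\Omega$ or maximal consecutive runs of formulas, are interchangeable iff $A=B$, or $k=n$ and for each $i$: if $A_i\in\mathrm{AtP}_\Omega$ then $B_i=A_i$, and if $A_i=\varphi_1\cdots\varphi_r$ is a run of formulas then $B_i=\psi_1\cdots\psi_l$ is a run of formulas with $\bigwedge_j\psi_j$ semantically equivalent to $\bigwedge_j\varphi_j$. *)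

theory Defs
  imports Main
begin

datatype ('p, 'a, 'ag) form =
    Prop 'p
  | Neg "('p, 'a, 'ag) form"
  | Box "('p, 'a, 'ag) prog" "('p, 'a, 'ag) form"
  | Cap 'ag "('p, 'a, 'ag) prog"
and ('p, 'a, 'ag) prog =
    Atm 'a
  | Test "('p, 'a, 'ag) form"
  | Imp "('p, 'a, 'ag) form" "('p, 'a, 'ag) form"
  | Seq "('p, 'a, 'ag) prog" "('p, 'a, 'ag) prog"
  | Choice "('p, 'a, 'ag) prog" "('p, 'a, 'ag) prog"
  | Star "('p, 'a, 'ag) prog"

inductive_set sigma_plus :: "('p, 'a, 'ag) prog set" where
  "Atm a \<in> sigma_plus"
| "Test \<phi> \<in> sigma_plus"
| "Imp \<phi> \<psi> \<in> sigma_plus"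
| "C \<in> sigma_plus \<Longrightarrow> D \<in> sigma_plus \<Longrightarrow> Seq C D \<in> sigma_plus"

definition test_rel :: "'w set \<Rightarrow> 'w rel" where
  "test_rel S = {(w, w) | w. w \<in> S}"

text \<open>An L-model is given by atomic relations R, a valuation V and an interpretation CV
  of the C-modality. The pair (T, P) (truth sets of formulas, relations of programs)
  is a semantics of the model iff it satisfies all semantic clauses of tauPDL
  (the clause for => is impredicative, so it is stated as an equation).\<close>
definition is_sem ::
  "('a \<Rightarrow> 'w rel) \<Rightarrow> ('p \<Rightarrow> 'w set) \<Rightarrow> ('ag \<Rightarrow> ('p, 'a, 'ag) prog \<Rightarrow> 'w set)
   \<Rightarrow> (('p, 'a, 'ag) form \<Rightarrow> 'w set) \<Rightarrow> (('p, 'a, 'ag) prog \<Rightarrow> 'w rel) \<Rightarrow> bool" where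
  "is_sem R V CV T P \<longleftrightarrow>
     (\<forall>p. T (Prop p) = V p) \<and>
     (\<forall>\<phi>. T (Neg \<phi>) = - T \<phi>) \<and>
     (\<forall>A \<phi>. T (Box A \<phi>) = {w. \<forall>w'. (w, w') \<in> P A \<longrightarrow> w' \<in> T \<phi>}) \<and>
     (\<forall>i A. T (Cap i A) = CV i A) \<and>
     (\<forall>a. P (Atm a) = R a) \<and>
     (\<forall>\<phi>. P (Test \<phi>) = test_rel (T \<phi>)) \<and>
     (\<forall>A B. P (Seq A B) = P A O P B) \<and>
     (\<forall>A B. P (Choice A B) = P A \<union> P B) \<and>
     (\<forall>A. P (Star A) = (P A)\<^sup>*) \<and>
     (\<forall>\<phi> \<psi>. P (Imp \<phi> \<psi>) =
        \<Union>{P C | C. C \<in> sigma_plus \<and>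
                    (\<forall>w \<in> T \<phi>. \<forall>w'. (w, w') \<in> P C \<longrightarrow> w' \<in> T \<psi>)})"

datatype ('p, 'a, 'ag) letter =
    LAt 'a
  | LOmega
  | LForm "('p, 'a, 'ag) form"

definition conc :: "'x list set \<Rightarrow> 'x list set \<Rightarrow> 'x list set" where
  "conc X Y = {x @ y | x y. x \<in> X \<and> y \<in> Y}"

definition kstar :: "'x list set \<Rightarrow> 'x list set" where
  "kstar X = (\<Union>n. ((conc X) ^^ n) {[]})"

text \<open>tt is a fixed tautology; Omega = tt => tt.\<close>
fun lang :: "('p, 'a, 'ag) form \<Rightarrow> ('p, 'a, 'ag) prog \<Rightarrow> ('p, 'a, 'ag) letter list set" where
  "lang tt (Atm a) = {[LAt a]}"
| "lang tt (Test \<phi>) = {[LForm \<phi>]}"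
| "lang tt (Imp \<phi> \<psi>) =
     (if \<phi> = tt \<and> \<psi> = tt then {[LOmega]}
      else {[LForm (Neg \<phi>), LOmega], [LOmega, LForm \<psi>]})"
| "lang tt (Choice A B) = lang tt A \<union> lang tt B"
| "lang tt (Seq A B) = conc (lang tt A) (lang tt B)"
| "lang tt (Star A) = kstar (lang tt A)"

fun letter_rel :: "('p, 'a, 'ag) form \<Rightarrow> (('p, 'a, 'ag) form \<Rightarrow> 'w set)
     \<Rightarrow> (('p, 'a, 'ag) prog \<Rightarrow> 'w rel) \<Rightarrow> ('p, 'a, 'ag) letter \<Rightarrow> 'w rel" where
  "letter_rel tt T P (LAt a) = P (Atm a)"
| "letter_rel tt T P LOmega = P (Imp tt tt)"
| "letter_rel tt T P (LForm \<phi>) = test_rel (T \<phi>)"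

fun word_rel :: "('p, 'a, 'ag) form \<Rightarrow> (('p, 'a, 'ag) form \<Rightarrow> 'w set)
     \<Rightarrow> (('p, 'a, 'ag) prog \<Rightarrow> 'w rel) \<Rightarrow> ('p, 'a, 'ag) letter list \<Rightarrow> 'w rel" where
  "word_rel tt T P [] = Id"
| "word_rel tt T P (x # xs) = letter_rel tt T P x O word_rel tt T P xs"

datatype ('p, 'a, 'ag) block =
    BLetter "('p, 'a, 'ag) letter"
  | BRun "('p, 'a, 'ag) form list"

fun blocks :: "('p, 'a, 'ag) letter list \<Rightarrow> ('p, 'a, 'ag) block list" where
  "blocks [] = []"
| "blocks (LForm \<phi> # xs) =
     (case blocks xs of
        BRun fs # bs \<Rightarrow> BRun (\<phi> # fs) # bs
      | bs \<Rightarrow> BRun [\<phi>] # bs)"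
| "blocks (x # xs) = BLetter x # blocks xs"

fun block_match :: "(('p, 'a, 'ag) form \<Rightarrow> 'w set)
     \<Rightarrow> ('p, 'a, 'ag) block \<Rightarrow> ('p, 'a, 'ag) block \<Rightarrow> bool" where
  "block_match T (BLetter x) (BLetter y) = (x = y)"
| "block_match T (BRun fs) (BRun gs) = (\<Inter>(T ` set fs) = \<Inter>(T ` set gs))"
| "block_match T _ _ = False"

definition interchangeable :: "(('p, 'a, 'ag) form \<Rightarrow> 'w set)
     \<Rightarrow> ('p, 'a, 'ag) letter list \<Rightarrow> ('p, 'a, 'ag) letter list \<Rightarrow> bool" where
  "interchangeable T A B \<longleftrightarrow>
     A = B \<or> (A \<noteq> [] \<and> B \<noteq> [] \<and> list_all2 (block_match T) (blocks A) (blocks B))"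

end

theory Submission
  imports Defs
begin

lemma word_rel_append: "word_rel tt T P (x @ y) = word_rel tt T P x O word_rel tt T P y"
  by (induction x) (auto simp: O_assoc)

lemma union_conc:
  "(\<Union>B \<in> conc X Y. word_rel tt T P B) =
   (\<Union>B \<in> X. word_rel tt T P B) O (\<Union>B \<in> Y. word_rel tt T P B)"
proof
  show "(\<Union>B \<in> conc X Y. word_rel tt T P B) \<subseteq> (\<Union>B \<in> X. word_rel tt T P B) O (\<Union>B \<in> Y. word_rel tt T P B)"
    unfolding conc_def by (auto simp: word_rel_append) blast
next
  show "(\<Union>B \<in> X. word_rel tt T P B) O (\<Union>B \<in> Y. word_rel tt T P B) \<subseteq> (\<Union>B \<in> conc X Y. word_rel tt T P B)"
  proof
    fix p assume "p \<in> (\<Union>B \<in> X. word_rel tt T P B) O (\<Union>B \<in> Y. word_rel tt T P B)"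
    then obtain a b c x y where "p = (a,c)" "x \<in> X" "y \<in> Y" "(a,b) \<in> word_rel tt T P x"
      "(b,c) \<in> word_rel tt T P y" by blast
    then show "p \<in> (\<Union>B \<in> conc X Y. word_rel tt T P B)"
    proof -
      have "x @ y \<in> conc X Y" unfolding conc_def using \<open>x \<in> X\<close> \<open>y \<in> Y\<close> by blast
      moreover have "p \<in> word_rel tt T P (x @ y)" using \<open>p = (a,c)\<close> \<open>(a,b) \<in> word_rel tt T P x\<close>
        \<open>(b,c) \<in> word_rel tt T P y\<close> by (auto simp: word_rel_append)
      ultimately show ?thesis by blast
    qed
  qed
qed

lemma union_pow:
  "(\<Union>B \<in> (conc X ^^ n) {[]}. word_rel tt T P B) = (\<Union>B \<in> X. word_rel tt T P B) ^^ n"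
proof (induction n)
  case 0 then show ?case by simp
next
  case (Suc n)
  have "(\<Union>B \<in> (conc X ^^ Suc n) {[]}. word_rel tt T P B)
      = (\<Union>B \<in> X. word_rel tt T P B) O (\<Union>B \<in> X. word_rel tt T P B) ^^ n"
    using Suc by (simp add: union_conc)
  also have "\<dots> = (\<Union>B \<in> X. word_rel tt T P B) ^^ Suc n"
    by (simp add: relpow_commute)
  finally show ?case .
qed

lemma union_kstar:
  "(\<Union>B \<in> kstar X. word_rel tt T P B) = (\<Union>B \<in> X. word_rel tt T P B)\<^sup>*"
proof -
  have "(\<Union>B \<in> kstar X. word_rel tt T P B) = (\<Union>n. \<Union>B \<in> (conc X ^^ n) {[]}. word_rel tt T P B)"
    unfolding kstar_def by blast
  also have "\<dots> = (\<Union>n. (\<Union>B \<in> X. word_rel tt T P B) ^^ n)" by (simp add: union_pow)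
  finally show ?thesis by (simp add: rtrancl_is_UN_relpow)
qed

fun block_rel where
  "block_rel tt T P (BLetter x) = letter_rel tt T P x"
| "block_rel tt T P (BRun fs) = test_rel (\<Inter>(T ` set fs))"

lemma test_rel_comp: "test_rel S O test_rel S' = test_rel (S \<inter> S')"
  unfolding test_rel_def by auto

lemma word_blocks:
  "word_rel tt T P A = foldr (\<lambda>b r. block_rel tt T P b O r) (blocks A) Id"
proof (induction A rule: blocks.induct)
  case 1 then show ?case by simp
next
  case (2 \<phi> xs)
  show ?case
  proof (cases "blocks xs")
    case Nil then show ?thesis using 2 by (simp add: test_rel_def)
  next
    case (Cons b bs)
    then show ?thesis using 2
      by (cases b) (auto simp: test_rel_def)
  qed
qed auto

lemma foldr_eq:
  "list_all2 (block_match T) bs cs \<Longrightarrow>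
   foldr (\<lambda>b r. block_rel tt T P b O r) bs Id = foldr (\<lambda>b r. block_rel tt T P b O r) cs Id"
proof (induction bs cs rule: list_all2_induct)
  case Nil then show ?case by simp
next
  case (Cons b bs c cs)
  have "block_rel tt T P b = block_rel tt T P c"
    using Cons(1) by (cases b; cases c) auto
  then show ?case using Cons by simp
qed

theorem mainTheorem9:
  fixes R :: "'a \<Rightarrow> 'w rel" and V :: "'p \<Rightarrow> 'w set"
    and CV :: "'ag \<Rightarrow> ('p, 'a, 'ag) prog \<Rightarrow> 'w set"
    and T :: "('p, 'a, 'ag) form \<Rightarrow> 'w set" and P :: "('p, 'a, 'ag) prog \<Rightarrow> 'w rel"
    and tt :: "('p, 'a, 'ag) form"
  assumes sem: "is_sem R V CV T P"
    and taut: "T tt = UNIV"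
  shows "(\<forall>A. P A = (\<Union>B \<in> lang tt A. word_rel tt T P B))
       \<and> (\<forall>A B. interchangeable T A B \<longrightarrow> word_rel tt T P A = word_rel tt T P B)"
proof
  have Neg: "\<And>\<phi>. T (Neg \<phi>) = - T \<phi>" and Atm: "\<And>a. P (Atm a) = R a"
    and Test: "\<And>\<phi>. P (Test \<phi>) = test_rel (T \<phi>)"
    and Seq: "\<And>A B. P (Seq A B) = P A O P B"
    and Ch: "\<And>A B. P (Choice A B) = P A \<union> P B"
    and St: "\<And>A. P (Star A) = (P A)\<^sup>*"
    and Imp: "\<And>\<phi> \<psi>. P (Imp \<phi> \<psi>) =
        \<Union>{P C | C. C \<in> sigma_plus \<and>
                    (\<forall>w \<in> T \<phi>. \<forall>w'. (w, w') \<in> P C \<longrightarrow> w' \<in> T \<psi>)}"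
    using sem unfolding is_sem_def by simp_all
  have Om: "P (Imp tt tt) = \<Union>{P C | C. C \<in> sigma_plus}"
    using Imp[of tt tt] taut by simp
  have ImpL: "P (Imp \<phi> \<psi>) = test_rel (T (Neg \<phi>)) O P (Imp tt tt) \<union> P (Imp tt tt) O test_rel (T \<psi>)"
    for \<phi> \<psi>
  proof
    show "P (Imp \<phi> \<psi>) \<subseteq> test_rel (T (Neg \<phi>)) O P (Imp tt tt) \<union> P (Imp tt tt) O test_rel (T \<psi>)"
    proof
      fix x assume "x \<in> P (Imp \<phi> \<psi>)"
      then obtain w w' C where x: "x = (w, w')" and C: "C \<in> sigma_plus"
        and good: "\<forall>w \<in> T \<phi>. \<forall>w'. (w, w') \<in> P C \<longrightarrow> w' \<in> T \<psi>" and wC: "(w,w') \<in> P C"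
        unfolding Imp by (cases x) auto
      have inO: "(w,w') \<in> P (Imp tt tt)" using C wC Om by auto
      show "x \<in> test_rel (T (Neg \<phi>)) O P (Imp tt tt) \<union> P (Imp tt tt) O test_rel (T \<psi>)"
      proof (cases "w \<in> T \<phi>")
        case True
        then have "w' \<in> T \<psi>" using good wC by blast
        then show ?thesis using x inO unfolding test_rel_def by blast
      next
        case False
        then show ?thesis using x inO Neg unfolding test_rel_def by blast
      qed
    qed
  next
    show "test_rel (T (Neg \<phi>)) O P (Imp tt tt) \<union> P (Imp tt tt) O test_rel (T \<psi>) \<subseteq> P (Imp \<phi> \<psi>)"
    proof
      fix x assume "x \<in> test_rel (T (Neg \<phi>)) O P (Imp tt tt) \<union> P (Imp tt tt) O test_rel (T \<psi>)"
      then show "x \<in> P (Imp \<phi> \<psi>)"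
      proof
        assume "x \<in> test_rel (T (Neg \<phi>)) O P (Imp tt tt)"
        then obtain w w' C where x: "x = (w,w')" and nw: "w \<notin> T \<phi>" and C: "C \<in> sigma_plus"
          and wC: "(w,w') \<in> P C"
          unfolding Om test_rel_def Neg by auto
        let ?C = "Seq (Test (Neg \<phi>)) C"
        have "?C \<in> sigma_plus" using C sigma_plus.intros by blast
        moreover have "\<forall>v \<in> T \<phi>. \<forall>v'. (v, v') \<in> P ?C \<longrightarrow> v' \<in> T \<psi>"
          by (auto simp: Seq Test test_rel_def Neg)
        moreover have "(w,w') \<in> P ?C" using nw wC by (auto simp: Seq Test test_rel_def Neg)
        ultimately show ?thesis unfolding Imp x by blast
      next
        assume "x \<in> P (Imp tt tt) O test_rel (T \<psi>)"
        then obtain w w' C where x: "x = (w,w')" and nw: "w' \<in> T \<psi>" and C: "C \<in> sigma_plus"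
          and wC: "(w,w') \<in> P C"
          unfolding Om test_rel_def by auto
        let ?C = "Seq C (Test \<psi>)"
        have "?C \<in> sigma_plus" using C sigma_plus.intros by blast
        moreover have "\<forall>v \<in> T \<phi>. \<forall>v'. (v, v') \<in> P ?C \<longrightarrow> v' \<in> T \<psi>"
          by (auto simp: Seq Test test_rel_def)
        moreover have "(w,w') \<in> P ?C" using nw wC by (auto simp: Seq Test test_rel_def)
        ultimately show ?thesis unfolding Imp x by blast
      qed
    qed
  qed
  show "\<forall>A. P A = (\<Union>B \<in> lang tt A. word_rel tt T P B)"
  proof
    fix A show "P A = (\<Union>B \<in> lang tt A. word_rel tt T P B)"
    proof (induction A rule: prog.induct[where ?P1.0="\<lambda>_. True"])
      case (Imp \<phi> \<psi>)
      show ?case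
      proof (cases "\<phi> = tt \<and> \<psi> = tt")
        case True then show ?thesis by auto
      next
        case False
        have "P (Imp \<phi> \<psi>) = test_rel (T (Neg \<phi>)) O P (Imp tt tt) \<union> P (Imp tt tt) O test_rel (T \<psi>)"
          by (rule ImpL)
        then show ?thesis using False by auto
      qed
    qed (simp_all add: Test Seq union_conc Ch St union_kstar)
  qed
next
  show "\<forall>A B. interchangeable T A B \<longrightarrow> word_rel tt T P A = word_rel tt T P B"
    unfolding interchangeable_def using foldr_eq word_blocks by metis
qed

end
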